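(* Let $\alpha\in(0,2)$, let $\Pi(u)=(1-u)\exp\big(-\frac{u}{1-u}\big)$ for $0\le u<1$, and for a function $g:[0,\infty)\to[0,1/\alpha)$ define $$Q[g](x)=\frac12\int_0^\infty\!\!\int_{-1}^1\Big(g(x')g(y')\Pi(\alpha g(x))\Pi(\alpha g(y))-g(x)g(y)\Pi(\alpha g(x'))\Pi(\alpha g(y'))\Big)\,d\xi\,dy,$$ where $x'=(1-\xi)\frac{x+y}{2}$ and $y'=(1+\xi)\frac{x+y}2$ (assuming all integrals below converge). Then: (i) for any $a,b\in\mathbb{R}$ and any such $g$ with $\int_0^\infty xg(x)\,dx=1$, $\int_0^\infty(a+bx)Q[g](x)\,dx=0$; (ii) with $\phi(\xi)=(1-\frac\alpha2)\log\frac{1}{1-\xi}+\alpha\xi$ and $f_\alpha(x)=\frac{1}{\phi'(\phi^{-1}(x))}$, one has $Q[f_\alpha](x)=0$ for all $x$; (iii) if $g(x,t)$ is a solution of $\partial_t g(x,t)=Q[g(\cdot,t)](x)$, then $$\frac{d}{dt}\int_0^\infty g(x,t)\log\Big(\frac{\alpha g(x,t)}{1-\alpha g(x,t)}\Big)\,dx\le0.$$ *)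

theory Defs
  imports "HOL-Analysis.Analysis"
begin

definition Pi_fun :: "real \<Rightarrow> real" where
  "Pi_fun u = (1 - u) * exp (- (u / (1 - u)))"

definition coll :: "real \<Rightarrow> (real \<Rightarrow> real) \<Rightarrow> real \<Rightarrow> real \<Rightarrow> real \<Rightarrow> real" where
  "coll \<alpha> g x y \<xi> =
     (let x' = (1 - \<xi>) * (x + y) / 2; y' = (1 + \<xi>) * (x + y) / 2 in
      g x' * g y' * Pi_fun (\<alpha> * g x) * Pi_fun (\<alpha> * g y)
      - g x * g y * Pi_fun (\<alpha> * g x') * Pi_fun (\<alpha> * g y'))"

definition Qop :: "real \<Rightarrow> (real \<Rightarrow> real) \<Rightarrow> real \<Rightarrow> real" where
  "Qop \<alpha> g x = 1/2 * (LBINT y:{0..}. (LBINT \<xi>:{-1..1}. coll \<alpha> g x y \<xi>))"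

definition phi :: "real \<Rightarrow> real \<Rightarrow> real" where
  "phi \<alpha> \<xi> = (1 - \<alpha>/2) * ln (1 / (1 - \<xi>)) + \<alpha> * \<xi>"

definition f_alpha :: "real \<Rightarrow> real \<Rightarrow> real" where
  "f_alpha \<alpha> x = 1 / deriv (phi \<alpha>) (the_inv_into {0..<1} (phi \<alpha>) x)"

definition ent :: "real \<Rightarrow> real \<Rightarrow> real" where
  "ent \<alpha> v = v * ln (\<alpha> * v / (1 - \<alpha> * v))"

definition ent' :: "real \<Rightarrow> real \<Rightarrow> real" where
  "ent' \<alpha> v = ln (\<alpha> * v / (1 - \<alpha> * v)) + 1 / (1 - \<alpha> * v)"

end

theory Submission
  imports Defs "HOL-Real_Asymp.Real_Asymp"
begin

abbreviation Om :: "(real \<times> real \<times> real) set" where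
  "Om \<equiv> {0..} \<times> {0..} \<times> {-1..1}"

lemma Om_borel[measurable]: "Om \<in> sets borel"
  by (intro borel_closed closed_Times closed_atLeast closed_atLeastAtMost)

lemma nn3:
  fixes f :: "real \<times> real \<times> real \<Rightarrow> ennreal"
  assumes [measurable]: "f \<in> borel_measurable borel"
  shows "(\<integral>\<^sup>+p. f p \<partial>lborel) = (\<integral>\<^sup>+x. \<integral>\<^sup>+y. \<integral>\<^sup>+z. f (x,y,z) \<partial>lborel \<partial>lborel \<partial>lborel)"
proof -
  have "(\<integral>\<^sup>+p. f p \<partial>lborel) = (\<integral>\<^sup>+p. f p \<partial>(lborel \<Otimes>\<^sub>M lborel))"
    by (simp add: lborel_prod)
  also have "\<dots> = (\<integral>\<^sup>+x. \<integral>\<^sup>+q. f (x,q) \<partial>lborel \<partial>lborel)"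
    by (rule lborel.nn_integral_fst[symmetric]) (simp add: lborel_prod)
  also have "\<dots> = (\<integral>\<^sup>+x. \<integral>\<^sup>+q. f (x,q) \<partial>(lborel \<Otimes>\<^sub>M lborel) \<partial>lborel)"
    by (simp add: lborel_prod)
  also have "\<dots> = (\<integral>\<^sup>+x. \<integral>\<^sup>+y. \<integral>\<^sup>+z. f (x,y,z) \<partial>lborel \<partial>lborel \<partial>lborel)"
    by (intro nn_integral_cong lborel.nn_integral_fst[symmetric]) (simp add: lborel_prod)
  finally show ?thesis .
qed

definition Rf :: "(real \<times> real \<times> real \<Rightarrow> ennreal) \<Rightarrow> ennreal" where
  "Rf f = (\<integral>\<^sup>+s. indicator {0..} s * ennreal s * (\<integral>\<^sup>+a. indicator {0..1} a *
       (\<integral>\<^sup>+b. indicator {0..1} b * f (s*a, s - s*a, 1 - 2*b) \<partial>lborel) \<partial>lborel) \<partial>lborel)"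

lemma core:
  fixes f :: "real \<times> real \<times> real \<Rightarrow> ennreal"
  assumes fm[measurable]: "f \<in> borel_measurable borel"
  shows "(\<integral>\<^sup>+p. indicator Om p * f p \<partial>lborel) = 2 * Rf f"
proof -
  define Hb where "Hb x y = (\<integral>\<^sup>+b. indicator {0..1} b * f (x, y, 1 - 2*b) \<partial>lborel)" for x y
  have Hbm[measurable]: "(\<lambda>(x, y). Hb x y) \<in> borel_measurable (borel \<Otimes>\<^sub>M borel)"
    unfolding Hb_def by measurable
  have "(\<integral>\<^sup>+p. indicator Om p * f p \<partial>lborel) =
     (\<integral>\<^sup>+x. \<integral>\<^sup>+y. \<integral>\<^sup>+z. indicator Om (x,y,z) * f (x,y,z) \<partial>lborel \<partial>lborel \<partial>lborel)"
    by (rule nn3) measurable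
  also have "\<dots> = (\<integral>\<^sup>+x. \<integral>\<^sup>+y. indicator {0..} x * indicator {0..} y * (2 * Hb x y) \<partial>lborel \<partial>lborel)"
  proof (intro nn_integral_cong)
    fix x y :: real
    have "(\<integral>\<^sup>+z. indicator Om (x,y,z) * f (x,y,z) \<partial>lborel) =
        (\<integral>\<^sup>+z. (indicator {0..} x * indicator {0..} y) * (indicator {-1..1} z * f (x,y,z)) \<partial>lborel)"
      by (intro nn_integral_cong) (auto split: split_indicator)
    also have "\<dots> = (indicator {0..} x * indicator {0..} y) * (\<integral>\<^sup>+z. indicator {-1..1} z * f (x,y,z) \<partial>lborel)"
      by (rule nn_integral_cmult) simp
    also have "(\<integral>\<^sup>+z. indicator {-1..1} z * f (x,y,z) \<partial>lborel) =
        ennreal \<bar>-2\<bar> * (\<integral>\<^sup>+b. indicator {-1..1} (1 + (-2) * b) * f (x,y,1 + (-2) * b) \<partial>lborel)"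
      by (rule nn_integral_real_affine) simp_all
    also have "(\<integral>\<^sup>+b. indicator {-1..1} (1 + (-2) * b) * f (x,y,1 + (-2) * b) \<partial>lborel) = Hb x y"
      unfolding Hb_def by (intro nn_integral_cong) (auto split: split_indicator)
    finally show "(\<integral>\<^sup>+z. indicator Om (x,y,z) * f (x,y,z) \<partial>lborel) =
       indicator {0..} x * indicator {0..} y * (2 * Hb x y)" by simp
  qed
  also have "\<dots> = (\<integral>\<^sup>+x. \<integral>\<^sup>+s. 2 * indicator {0..} x * indicator {0..} (s - x) * Hb x (s - x) \<partial>lborel \<partial>lborel)"
  proof (rule nn_integral_cong)
    fix x :: real
    have h: "(\<integral>\<^sup>+y. indicator {0..} x * indicator {0..} y * (2 * Hb x y) \<partial>lborel) =
       ennreal \<bar>1\<bar> * (\<integral>\<^sup>+s. indicator {0..} x * indicator {0..} (-x + 1 * s) * (2 * Hb x (-x + 1 * s)) \<partial>lborel)"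
      by (rule nn_integral_real_affine) simp_all
    show "(\<integral>\<^sup>+y. indicator {0..} x * indicator {0..} y * (2 * Hb x y) \<partial>lborel) =
       (\<integral>\<^sup>+s. 2 * indicator {0..} x * indicator {0..} (s - x) * Hb x (s - x) \<partial>lborel)"
    proof -
      have e: "\<And>s::real. -x + 1 * s = s - x" by simp
      have e2: "\<And>s. indicator {0..} x * indicator {0..} (s - x) * (2 * Hb x (s - x)) = 2 * indicator {0..} x * indicator {0..} (s - x) * Hb x (s - x)"
        by (simp only: ac_simps)
      show ?thesis using h unfolding e e2 by simp
    qed
  qed
  also have "\<dots> = (\<integral>\<^sup>+s. \<integral>\<^sup>+x. 2 * indicator {0..} x * indicator {0..} (s - x) * Hb x (s - x) \<partial>lborel \<partial>lborel)"
    by (rule lborel_pair.Fubini'[symmetric]) simp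
  also have "\<dots> = (\<integral>\<^sup>+s. 2 * (indicator {0..} s * ennreal s * (\<integral>\<^sup>+a. indicator {0..1} a *
       Hb (s*a) (s - s*a) \<partial>lborel)) \<partial>lborel)"
  proof (intro nn_integral_cong_AE)
    have "AE s in lborel. s \<noteq> 0" by (rule AE_lborel_singleton)
    then show "AE s in lborel. (\<integral>\<^sup>+x. 2 * indicator {0..} x * indicator {0..} (s - x) * Hb x (s - x) \<partial>lborel) =
       2 * (indicator {0..} s * ennreal s * (\<integral>\<^sup>+a. indicator {0..1} a * Hb (s*a) (s - s*a) \<partial>lborel))"
    proof eventually_elim
      fix s :: real assume "s \<noteq> 0"
      show "(\<integral>\<^sup>+x. 2 * indicator {0..} x * indicator {0..} (s - x) * Hb x (s - x) \<partial>lborel) =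
       2 * (indicator {0..} s * ennreal s * (\<integral>\<^sup>+a. indicator {0..1} a * Hb (s*a) (s - s*a) \<partial>lborel))"
      proof (cases "s < 0")
        case True
        have "(\<integral>\<^sup>+x. 2 * indicator {0..} x * indicator {0..} (s - x) * Hb x (s - x) \<partial>lborel) = 0"
        proof -
          have z: "\<And>x. (indicator {0..} x * indicator {0..} (s - x) :: ennreal) = 0"
            using True by (auto simp: indicator_def)
          have z': "\<And>x. 2 * indicator {0..} x * indicator {0..} (s - x) * Hb x (s - x) = (0::ennreal)"
            using z by (metis mult.assoc mult_zero_left mult_zero_right)
          show ?thesis by (simp add: z')
        qed
        then show ?thesis using True by simp
      next
        case False
        with \<open>s \<noteq> 0\<close> have s: "s > 0" by simp
        have "(\<integral>\<^sup>+x. 2 * indicator {0..} x * indicator {0..} (s - x) * Hb x (s - x) \<partial>lborel) =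
          ennreal \<bar>s\<bar> * (\<integral>\<^sup>+a. 2 * indicator {0..} (0 + s*a) * indicator {0..} (s - (0 + s*a)) * Hb (0 + s*a) (s - (0 + s*a)) \<partial>lborel)"
          using s by (intro nn_integral_real_affine) simp_all
        also have "(\<integral>\<^sup>+a. 2 * indicator {0..} (0 + s*a) * indicator {0..} (s - (0 + s*a)) * Hb (0 + s*a) (s - (0 + s*a)) \<partial>lborel)
           = (\<integral>\<^sup>+a. 2 * (indicator {0..1} a * Hb (s*a) (s - s*a)) \<partial>lborel)"
        proof (intro nn_integral_cong)
          fix a
          have "indicator {0..} (s*a) * indicator {0..} (s - s*a) = (indicator {0..1} a :: ennreal)"
            using s by (auto split: split_indicator simp: zero_le_mult_iff mult_le_cancel_left1)
          then show "2 * indicator {0..} (0 + s*a) * indicator {0..} (s - (0 + s*a)) * Hb (0 + s*a) (s - (0 + s*a))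
             = 2 * (indicator {0..1} a * Hb (s*a) (s - s*a))"
            by (simp add: mult_ac)
        qed
        also have "\<dots> = 2 * (\<integral>\<^sup>+a. indicator {0..1} a * Hb (s*a) (s - s*a) \<partial>lborel)"
          by (rule nn_integral_cmult) simp
        finally show ?thesis using s by (simp add: mult_ac)
      qed
    qed
  qed
  also have "\<dots> = 2 * Rf f"
    unfolding Rf_def Hb_def by (rule nn_integral_cmult) simp
  finally show ?thesis .
qed

definition Tm :: "real \<times> real \<times> real \<Rightarrow> real \<times> real \<times> real" where
  "Tm p = (case p of (x, y, z) \<Rightarrow> ((1 - z) * (x + y) / 2, (1 + z) * (x + y) / 2, 1 - 2 * x / (x + y)))"

definition Sm :: "real \<times> real \<times> real \<Rightarrow> real \<times> real \<times> real" where
  "Sm p = (case p of (x, y, z) \<Rightarrow> (y, x, - z))"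

lemma Tm_meas[measurable]: "Tm \<in> borel_measurable borel"
  unfolding Tm_def borel_prod[symmetric] by measurable

lemma Sm_meas[measurable]: "Sm \<in> borel_measurable borel"
  unfolding Sm_def borel_prod[symmetric] by measurable

lemma Tm_Om: "p \<in> Om \<Longrightarrow> Tm p \<in> Om"
proof (cases p)
  case (fields x y z)
  assume "p \<in> Om"
  then have h: "0 \<le> x" "0 \<le> y" "-1 \<le> z" "z \<le> 1" using fields by auto
  have 1: "0 \<le> (1 - z) * (x + y) / 2" "0 \<le> (1 + z) * (x + y) / 2" using h by simp_all
  have 2: "-1 \<le> 1 - 2 * x / (x + y) \<and> 1 - 2 * x / (x + y) \<le> 1"
  proof (cases "x + y = 0")
    case False
    then have "x + y > 0" using h by simp
    then have "0 \<le> x / (x + y)" "x / (x + y) \<le> 1" using h by simp_all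
    then show ?thesis by simp
  qed simp
  show ?thesis using 1 2 fields by (simp add: Tm_def)
qed

lemma Sm_Om: "p \<in> Om \<Longrightarrow> Sm p \<in> Om"
  by (cases p) (auto simp: Sm_def)

lemma swap_ab:
  fixes h :: "real \<Rightarrow> real \<Rightarrow> ennreal"
  assumes [measurable]: "case_prod h \<in> borel_measurable (borel \<Otimes>\<^sub>M borel)"
  shows "(\<integral>\<^sup>+a. indicator {0..1} a * (\<integral>\<^sup>+b. indicator {0..1} b * h a b \<partial>lborel) \<partial>lborel) =
         (\<integral>\<^sup>+a. indicator {0..1} a * (\<integral>\<^sup>+b. indicator {0..1} b * h b a \<partial>lborel) \<partial>lborel)"
proof -
  have "(\<integral>\<^sup>+a. indicator {0..1} a * (\<integral>\<^sup>+b. indicator {0..1} b * h a b \<partial>lborel) \<partial>lborel) =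
        (\<integral>\<^sup>+a. (\<integral>\<^sup>+b. indicator {0..1} a * (indicator {0..1} b * h a b) \<partial>lborel) \<partial>lborel)"
    by (intro nn_integral_cong nn_integral_cmult[symmetric]) simp
  also have "\<dots> = (\<integral>\<^sup>+b. (\<integral>\<^sup>+a. indicator {0..1} a * (indicator {0..1} b * h a b) \<partial>lborel) \<partial>lborel)"
    by (rule lborel_pair.Fubini'[symmetric]) simp
  also have "\<dots> = (\<integral>\<^sup>+b. indicator {0..1} b * (\<integral>\<^sup>+a. indicator {0..1} a * h a b \<partial>lborel) \<partial>lborel)"
  proof (rule nn_integral_cong)
    fix b :: real
    have "(\<integral>\<^sup>+a. indicator {0..1} a * (indicator {0..1} b * h a b) \<partial>lborel) =
       (\<integral>\<^sup>+a. indicator {0..1} b * (indicator {0..1} a * h a b) \<partial>lborel)"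
      by (simp only: ac_simps)
    also have "\<dots> = indicator {0..1} b * (\<integral>\<^sup>+a. indicator {0..1} a * h a b \<partial>lborel)"
      by (rule nn_integral_cmult) simp
    finally show "(\<integral>\<^sup>+a. indicator {0..1} a * (indicator {0..1} b * h a b) \<partial>lborel) =
       indicator {0..1} b * (\<integral>\<^sup>+a. indicator {0..1} a * h a b \<partial>lborel)" .
  qed
  finally show ?thesis .
qed

lemma flip01:
  fixes k :: "real \<Rightarrow> ennreal"
  assumes [measurable]: "k \<in> borel_measurable borel"
  shows "(\<integral>\<^sup>+b. indicator {0..1} b * k b \<partial>lborel) = (\<integral>\<^sup>+b. indicator {0..1} b * k (1 - b) \<partial>lborel)"
proof -
  have "(\<integral>\<^sup>+b. indicator {0..1} b * k b \<partial>lborel) =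
      ennreal \<bar>-1\<bar> * (\<integral>\<^sup>+b. indicator {0..1} (1 + (-1) * b) * k (1 + (-1) * b) \<partial>lborel)"
    by (rule nn_integral_real_affine) simp_all
  also have "(\<integral>\<^sup>+b. indicator {0..1} (1 + (-1) * b) * k (1 + (-1) * b) \<partial>lborel) =
      (\<integral>\<^sup>+b. indicator {0..1} b * k (1 - b) \<partial>lborel)"
  proof (rule nn_integral_cong)
    fix b :: real
    have "indicator {0..1} (1 + (-1)*b) = (indicator {0..1} b :: ennreal)" by (auto simp: indicator_def)
    then show "indicator {0..1} (1 + (-1) * b) * k (1 + (-1) * b) = indicator {0..1} b * k (1 - b)" by simp
  qed
  finally show ?thesis by simp
qed

lemma Rf_T:
  fixes f :: "real \<times> real \<times> real \<Rightarrow> ennreal"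
  assumes [measurable]: "f \<in> borel_measurable borel"
  shows "Rf (\<lambda>p. f (Tm p)) = Rf f"
  unfolding Rf_def
proof (rule nn_integral_cong_AE)
  have "AE s in lborel. s \<noteq> 0" by (rule AE_lborel_singleton)
  then show "AE s in lborel. indicator {0..} s * ennreal s * (\<integral>\<^sup>+a. indicator {0..1} a *
       (\<integral>\<^sup>+b. indicator {0..1} b * f (Tm (s*a, s - s*a, 1 - 2*b)) \<partial>lborel) \<partial>lborel) =
     indicator {0..} s * ennreal s * (\<integral>\<^sup>+a. indicator {0..1} a *
       (\<integral>\<^sup>+b. indicator {0..1} b * f (s*a, s - s*a, 1 - 2*b) \<partial>lborel) \<partial>lborel)"
  proof eventually_elim
    fix s :: real assume s: "s \<noteq> 0"
    have e: "Tm (s*a, s - s*a, 1 - 2*b) = (s*b, s - s*b, 1 - 2*a)" for a b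
      using s by (simp add: Tm_def field_simps)
    have "(\<integral>\<^sup>+a. indicator {0..1} a * (\<integral>\<^sup>+b. indicator {0..1} b * f (s*b, s - s*b, 1 - 2*a) \<partial>lborel) \<partial>lborel) =
        (\<integral>\<^sup>+a. indicator {0..1} a * (\<integral>\<^sup>+b. indicator {0..1} b * f (s*a, s - s*a, 1 - 2*b) \<partial>lborel) \<partial>lborel)"
      by (rule swap_ab) simp
    then show "indicator {0..} s * ennreal s * (\<integral>\<^sup>+a. indicator {0..1} a *
       (\<integral>\<^sup>+b. indicator {0..1} b * f (Tm (s*a, s - s*a, 1 - 2*b)) \<partial>lborel) \<partial>lborel) =
     indicator {0..} s * ennreal s * (\<integral>\<^sup>+a. indicator {0..1} a *
       (\<integral>\<^sup>+b. indicator {0..1} b * f (s*a, s - s*a, 1 - 2*b) \<partial>lborel) \<partial>lborel)"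
      unfolding e by simp
  qed
qed

lemma Rf_S:
  fixes f :: "real \<times> real \<times> real \<Rightarrow> ennreal"
  assumes [measurable]: "f \<in> borel_measurable borel"
  shows "Rf (\<lambda>p. f (Sm p)) = Rf f"
  unfolding Rf_def
proof (rule nn_integral_cong)
  fix s :: real
  have "(\<integral>\<^sup>+a. indicator {0..1} a * (\<integral>\<^sup>+b. indicator {0..1} b * f (Sm (s*a, s - s*a, 1 - 2*b)) \<partial>lborel) \<partial>lborel) =
        (\<integral>\<^sup>+a. indicator {0..1} a * (\<integral>\<^sup>+b. indicator {0..1} b * f (Sm (s*(1-a), s - s*(1-a), 1 - 2*b)) \<partial>lborel) \<partial>lborel)"
    by (rule flip01) simp
  also have "\<dots> = (\<integral>\<^sup>+a. indicator {0..1} a * (\<integral>\<^sup>+b. indicator {0..1} b * f (Sm (s*(1-a), s - s*(1-a), 1 - 2*(1-b))) \<partial>lborel) \<partial>lborel)"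
    by (rule nn_integral_cong, rule arg_cong2[where f="(*)"], rule refl, rule flip01) simp
  also have "\<dots> = (\<integral>\<^sup>+a. indicator {0..1} a * (\<integral>\<^sup>+b. indicator {0..1} b * f (s*a, s - s*a, 1 - 2*b) \<partial>lborel) \<partial>lborel)"
  proof -
    have "Sm (s*(1-a), s - s*(1-a), 1 - 2*(1-b)) = (s*a, s - s*a, 1 - 2*b)" for a b
      by (simp add: Sm_def algebra_simps)
    then show ?thesis by simp
  qed
  finally show "indicator {0..} s * ennreal s * (\<integral>\<^sup>+a. indicator {0..1} a * (\<integral>\<^sup>+b. indicator {0..1} b * f (Sm (s*a, s - s*a, 1 - 2*b)) \<partial>lborel) \<partial>lborel) =
        indicator {0..} s * ennreal s * (\<integral>\<^sup>+a. indicator {0..1} a * (\<integral>\<^sup>+b. indicator {0..1} b * f (s*a, s - s*a, 1 - 2*b) \<partial>lborel) \<partial>lborel)" by simp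
qed

lemma ennreal_ind_mult: "ennreal (indicator A p * x) = indicator A p * ennreal x"
  by (simp split: split_indicator)

lemma transfer:
  fixes U :: "real \<times> real \<times> real \<Rightarrow> real \<times> real \<times> real" and F :: "real \<times> real \<times> real \<Rightarrow> real"
  assumes Um[measurable]: "U \<in> borel \<rightarrow>\<^sub>M borel"
    and UOm: "\<And>p. p \<in> Om \<Longrightarrow> U p \<in> Om"
    and UR: "\<And>f. f \<in> borel_measurable borel \<Longrightarrow> Rf (\<lambda>p. f (U p)) = Rf f"
    and F: "set_integrable lborel Om F"
  shows "set_integrable lborel Om (\<lambda>p. F (U p))"
    and "(LINT p:Om|lborel. F (U p)) = (LINT p:Om|lborel. F p)"
proof -
  define h where "h p = indicator Om p * F p" for p
  have hm[measurable]: "h \<in> borel_measurable borel"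
    using F unfolding set_integrable_def h_def by (simp add: borel_measurable_integrable)
  have hi: "integrable lborel h"
    using F unfolding set_integrable_def h_def by simp
  have key: "indicator Om p * F (U p) = indicator Om p * h (U p)" for p
    using UOm[of p] by (auto simp: h_def split: split_indicator)
  have nnU: "(\<integral>\<^sup>+p. ennreal (indicator Om p * k (U p)) \<partial>lborel) = (\<integral>\<^sup>+p. ennreal (indicator Om p * k p) \<partial>lborel)"
    if [measurable]: "k \<in> borel_measurable borel" for k :: "_ \<Rightarrow> real"
  proof -
    have "(\<integral>\<^sup>+p. ennreal (indicator Om p * k (U p)) \<partial>lborel) = (\<integral>\<^sup>+p. indicator Om p * (\<lambda>q. ennreal (k q)) (U p) \<partial>lborel)"
      by (simp add: ennreal_ind_mult)
    also have "\<dots> = 2 * Rf (\<lambda>p. (\<lambda>q. ennreal (k q)) (U p))"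
      by (rule core) simp
    also have "\<dots> = 2 * Rf (\<lambda>q. ennreal (k q))"
      by (subst UR) simp_all
    also have "\<dots> = (\<integral>\<^sup>+p. indicator Om p * ennreal (k p) \<partial>lborel)"
      by (rule core[symmetric]) simp
    finally show ?thesis by (simp add: ennreal_ind_mult)
  qed
  have m2: "(\<lambda>p. indicator Om p * F (U p)) \<in> borel_measurable lborel"
    unfolding key by simp
  have ih: "integrable lborel (\<lambda>p. indicator Om p * F (U p))"
    unfolding integrable_iff_bounded
  proof
    show "(\<lambda>p. indicator Om p * F (U p)) \<in> borel_measurable lborel" by (fact m2)
    have "(\<integral>\<^sup>+p. ennreal (norm (indicator Om p * F (U p))) \<partial>lborel) =
        (\<integral>\<^sup>+p. ennreal (indicator Om p * (\<lambda>q. norm (h q)) (U p)) \<partial>lborel)"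
      unfolding key by (intro nn_integral_cong) (simp split: split_indicator)
    also have "\<dots> = (\<integral>\<^sup>+p. ennreal (indicator Om p * norm (h p)) \<partial>lborel)"
      by (rule nnU) simp
    also have "\<dots> = (\<integral>\<^sup>+p. ennreal (norm (h p)) \<partial>lborel)"
      by (intro nn_integral_cong) (simp add: h_def split: split_indicator)
    also have "\<dots> < \<infinity>" using hi unfolding integrable_iff_bounded by simp
    finally show "(\<integral>\<^sup>+p. ennreal (norm (indicator Om p * F (U p))) \<partial>lborel) < \<infinity>" .
  qed
  then show "set_integrable lborel Om (\<lambda>p. F (U p))"
    unfolding set_integrable_def by simp
  have "(LINT p:Om|lborel. F (U p)) = integral\<^sup>L lborel (\<lambda>p. indicator Om p * h (U p))"
    unfolding set_lebesgue_integral_def key[symmetric] by simp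
  also have "\<dots> = enn2real (\<integral>\<^sup>+p. ennreal (indicator Om p * h (U p)) \<partial>lborel) -
       enn2real (\<integral>\<^sup>+p. ennreal (- (indicator Om p * h (U p))) \<partial>lborel)"
    by (rule real_lebesgue_integral_def) (use ih in \<open>simp add: key\<close>)
  also have "\<dots> = enn2real (\<integral>\<^sup>+p. ennreal (indicator Om p * h p) \<partial>lborel) -
       enn2real (\<integral>\<^sup>+p. ennreal (indicator Om p * (\<lambda>q. - h q) p) \<partial>lborel)"
    using nnU[of h] nnU[of "\<lambda>q. - h q"] by simp
  also have "\<dots> = enn2real (\<integral>\<^sup>+p. ennreal (h p) \<partial>lborel) - enn2real (\<integral>\<^sup>+p. ennreal (- h p) \<partial>lborel)"
  proof -
    have e: "\<And>p. indicator Om p * h p = h p" by (simp add: h_def split: split_indicator)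
    have e2: "\<And>p. indicator Om p * (- h p) = - h p" by (simp add: h_def split: split_indicator)
    show ?thesis by (simp only: e e2)
  qed
  also have "\<dots> = integral\<^sup>L lborel h"
    by (rule real_lebesgue_integral_def[symmetric]) (fact hi)
  also have "\<dots> = (LINT p:Om|lborel. F p)"
    unfolding set_lebesgue_integral_def h_def by simp
  finally show "(LINT p:Om|lborel. F (U p)) = (LINT p:Om|lborel. F p)" .
qed

lemma FUB:
  fixes c :: "real \<Rightarrow> real" and K :: "real \<Rightarrow> real \<Rightarrow> real \<Rightarrow> real"
  assumes int: "set_integrable lborel Om (\<lambda>(x, y, z). c x * K x y z)"
    and meas: "(\<lambda>x. indicator {0..} x * (c x * (1/2 * (LBINT y:{0..}. LBINT z:{-1..1}. K x y z)))) \<in> borel_measurable lborel"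
  shows "(LBINT x:{0..}. c x * (1/2 * (LBINT y:{0..}. LBINT z:{-1..1}. K x y z))) =
     1/2 * (LINT p:Om|lborel. (case p of (x, y, z) \<Rightarrow> c x * K x y z))"
proof -
  define H where "H p = indicator Om p * (case p of (x, y, z) \<Rightarrow> c x * K x y z)" for p
  have Hi: "integrable lborel H" using int unfolding set_integrable_def H_def by simp
  then have Hm[measurable]: "H \<in> borel_measurable borel" by (simp add: borel_measurable_integrable)
  have Hi2: "integrable (lborel \<Otimes>\<^sub>M lborel) H" using Hi by (simp add: lborel_prod)
  have Hm2[measurable]: "H \<in> borel_measurable (lborel \<Otimes>\<^sub>M lborel)"
    using Hi2 by (simp add: borel_measurable_integrable)
  have eq1: "(\<integral>x. (\<integral>q. H (x, q) \<partial>lborel) \<partial>lborel) = integral\<^sup>L lborel H"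
    using lborel_pair.integral_fst'[OF Hi2] by (simp add: lborel_prod)
  have ae: "AE x in lborel. integrable lborel (\<lambda>q. H (x, q))"
    using lborel_pair.AE_integrable_fst'[OF Hi2] .
  have ae2: "AE x in lborel. indicator {0..} x * (c x * (1/2 * (LBINT y:{0..}. LBINT z:{-1..1}. K x y z)))
        = 1/2 * (\<integral>q. H (x, q) \<partial>lborel)"
    using ae
  proof eventually_elim
    fix x assume ix: "integrable lborel (\<lambda>q. H (x, q))"
    then have ix2: "integrable (lborel \<Otimes>\<^sub>M lborel) (\<lambda>q. H (x, q))" by (simp add: lborel_prod)
    have "(\<integral>q. H (x, q) \<partial>lborel) = (\<integral>q. H (x, q) \<partial>(lborel \<Otimes>\<^sub>M lborel))" by (simp add: lborel_prod)
    also have "\<dots> = (\<integral>y. \<integral>z. H (x, y, z) \<partial>lborel \<partial>lborel)"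
      using lborel_pair.integral_fst'[OF ix2] by simp
    also have "\<dots> = (\<integral>y. (indicator {0..} x * c x) * (indicator {0..} y * (\<integral>z. indicator {-1..1} z * K x y z \<partial>lborel)) \<partial>lborel)"
    proof (rule Bochner_Integration.integral_cong[OF refl])
      fix y
      have "(\<integral>z. H (x, y, z) \<partial>lborel) = (\<integral>z. (indicator {0..} x * c x * indicator {0..} y) * (indicator {-1..1} z * K x y z) \<partial>lborel)"
        by (rule Bochner_Integration.integral_cong[OF refl]) (simp add: H_def split: split_indicator)
      also have "\<dots> = (indicator {0..} x * c x) * (indicator {0..} y * (\<integral>z. indicator {-1..1} z * K x y z \<partial>lborel))"
        by (simp only: integral_mult_right_zero mult.assoc)
      finally show "(\<integral>z. H (x, y, z) \<partial>lborel) = (indicator {0..} x * c x) * (indicator {0..} y * (\<integral>z. indicator {-1..1} z * K x y z \<partial>lborel))" .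
    qed
    also have "\<dots> = (indicator {0..} x * c x) * (LBINT y:{0..}. LBINT z:{-1..1}. K x y z)"
      by (simp only: integral_mult_right_zero set_lebesgue_integral_def real_scaleR_def)
    finally show "indicator {0..} x * (c x * (1/2 * (LBINT y:{0..}. LBINT z:{-1..1}. K x y z)))
        = 1/2 * (\<integral>q. H (x, q) \<partial>lborel)" by simp
  qed
  have "(LBINT x:{0..}. c x * (1/2 * (LBINT y:{0..}. LBINT z:{-1..1}. K x y z))) =
      (\<integral>x. indicator {0..} x * (c x * (1/2 * (LBINT y:{0..}. LBINT z:{-1..1}. K x y z))) \<partial>lborel)"
    by (simp add: set_lebesgue_integral_def)
  also have "\<dots> = (\<integral>x. 1/2 * (\<integral>q. H (x, q) \<partial>lborel) \<partial>lborel)"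
  proof (rule integral_cong_AE)
    show "(\<lambda>x. 1/2 * (\<integral>q. H (x, q) \<partial>lborel)) \<in> borel_measurable lborel"
      by measurable
  qed (use meas ae2 in auto)
  also have "\<dots> = 1/2 * integral\<^sup>L lborel H" using eq1 by simp
  also have "\<dots> = 1/2 * (LINT p:Om|lborel. (case p of (x, y, z) \<Rightarrow> c x * K x y z))"
    unfolding set_lebesgue_integral_def H_def[abs_def] by simp
  finally show ?thesis .
qed

lemma coll_S: "coll \<alpha> G y x (- z) = coll \<alpha> G x y z"
proof -
  have "(1 - - z) * (y + x) / 2 = (1 + z) * (x + y) / 2" "(1 + - z) * (y + x) / 2 = (1 - z) * (x + y) / 2"
    by (simp_all add: algebra_simps)
  then show ?thesis unfolding coll_def Let_def by (simp only: ac_simps)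
qed

lemma coll_T:
  assumes "0 \<le> x" "0 \<le> y"
  shows "coll \<alpha> G ((1 - z) * (x + y) / 2) ((1 + z) * (x + y) / 2) (1 - 2 * x / (x + y)) = - coll \<alpha> G x y z"
proof (cases "x + y = 0")
  case True
  then have "x = 0" "y = 0" using assms by auto
  then show ?thesis by (simp add: coll_def Let_def)
next
  case False
  have s: "(1 - z) * (x + y) / 2 + (1 + z) * (x + y) / 2 = x + y" by (simp add: field_simps)
  have 1: "(1 - (1 - 2 * x / (x + y))) * (x + y) / 2 = x" using False by (simp add: field_simps)
  have 2: "(1 + (1 - 2 * x / (x + y))) * (x + y) / 2 = y" using False by (simp add: field_simps)
  show ?thesis unfolding coll_def Let_def s 1 2 by simp
qed

lemma symm:
  fixes \<psi> G :: "real \<Rightarrow> real"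
  assumes int: "set_integrable lborel Om (\<lambda>(x, y, z). \<psi> x * coll \<alpha> G x y z)"
  shows "set_integrable lborel Om (\<lambda>(x, y, z). (\<psi> x + \<psi> y - \<psi> ((1 - z) * (x + y) / 2) - \<psi> ((1 + z) * (x + y) / 2)) * coll \<alpha> G x y z)"
    and "4 * (LINT p:Om|lborel. (case p of (x, y, z) \<Rightarrow> \<psi> x * coll \<alpha> G x y z)) =
       (LINT p:Om|lborel. (case p of (x, y, z) \<Rightarrow> (\<psi> x + \<psi> y - \<psi> ((1 - z) * (x + y) / 2) - \<psi> ((1 + z) * (x + y) / 2)) * coll \<alpha> G x y z))"
proof -
  define F where "F = (\<lambda>(x, y, z). \<psi> x * coll \<alpha> G x y z)"
  have FT: "set_integrable lborel Om (\<lambda>p. F (Tm p))" "(LINT p:Om|lborel. F (Tm p)) = (LINT p:Om|lborel. F p)"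
    using transfer[OF Tm_meas Tm_Om Rf_T, of F] int unfolding F_def by auto
  have FS: "set_integrable lborel Om (\<lambda>p. F (Sm p))" "(LINT p:Om|lborel. F (Sm p)) = (LINT p:Om|lborel. F p)"
    using transfer[OF Sm_meas Sm_Om Rf_S, of F] int unfolding F_def by auto
  have FTS: "set_integrable lborel Om (\<lambda>p. F (Tm (Sm p)))" "(LINT p:Om|lborel. F (Tm (Sm p))) = (LINT p:Om|lborel. F (Tm p))"
    using transfer[OF Sm_meas Sm_Om Rf_S, of "\<lambda>p. F (Tm p)"] FT(1) by auto
  have pw: "indicator Om p * (case p of (x, y, z) \<Rightarrow> (\<psi> x + \<psi> y - \<psi> ((1 - z) * (x + y) / 2) - \<psi> ((1 + z) * (x + y) / 2)) * coll \<alpha> G x y z)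
     = indicator Om p * F p + indicator Om p * F (Sm p) + indicator Om p * F (Tm p) + indicator Om p * F (Tm (Sm p))" for p
  proof (cases "p \<in> Om")
    case True
    obtain x y z where p: "p = (x, y, z)" by (cases p)
    with True have xy: "0 \<le> x" "0 \<le> y" by auto
    have a: "F (Sm p) = \<psi> y * coll \<alpha> G x y z" unfolding p F_def Sm_def by (simp add: coll_S)
    have b: "F (Tm p) = - \<psi> ((1 - z) * (x + y) / 2) * coll \<alpha> G x y z" unfolding p F_def Tm_def using coll_T[OF xy] by simp
    have c: "F (Tm (Sm p)) = - \<psi> ((1 + z) * (x + y) / 2) * coll \<alpha> G x y z"
    proof -
      have "F (Tm (Sm p)) = \<psi> ((1 - - z) * (y + x) / 2) * coll \<alpha> G ((1 - - z) * (y + x) / 2) ((1 + - z) * (y + x) / 2) (1 - 2 * y / (y + x))"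
        unfolding p F_def Tm_def Sm_def by simp
      also have "coll \<alpha> G ((1 - - z) * (y + x) / 2) ((1 + - z) * (y + x) / 2) (1 - 2 * y / (y + x)) = - coll \<alpha> G y x (-z)"
        using coll_T[OF xy(2,1), where z="-z" and \<alpha>=\<alpha> and G=G] by simp
      also have "(1 - - z) * (y + x) / 2 = (1 + z) * (x + y) / 2" by (simp add: algebra_simps)
      finally show ?thesis by (simp add: coll_S)
    qed
    show ?thesis using True unfolding a b c by (simp add: p F_def algebra_simps)
  qed simp
  have i1: "integrable lborel (\<lambda>p. indicator Om p * F p)" using int unfolding set_integrable_def F_def by simp
  have i2: "integrable lborel (\<lambda>p. indicator Om p * F (Sm p))" using FS(1) unfolding set_integrable_def by simp
  have i3: "integrable lborel (\<lambda>p. indicator Om p * F (Tm p))" using FT(1) unfolding set_integrable_def by simp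
  have i4: "integrable lborel (\<lambda>p. indicator Om p * F (Tm (Sm p)))" using FTS(1) unfolding set_integrable_def by simp
  show "set_integrable lborel Om (\<lambda>(x, y, z). (\<psi> x + \<psi> y - \<psi> ((1 - z) * (x + y) / 2) - \<psi> ((1 + z) * (x + y) / 2)) * coll \<alpha> G x y z)"
    unfolding set_integrable_def real_scaleR_def pw using i1 i2 i3 i4 by simp
  have "(LINT p:Om|lborel. (case p of (x, y, z) \<Rightarrow> (\<psi> x + \<psi> y - \<psi> ((1 - z) * (x + y) / 2) - \<psi> ((1 + z) * (x + y) / 2)) * coll \<alpha> G x y z))
     = (LINT p:Om|lborel. F p) + (LINT p:Om|lborel. F (Sm p)) + (LINT p:Om|lborel. F (Tm p)) + (LINT p:Om|lborel. F (Tm (Sm p)))"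
    unfolding set_lebesgue_integral_def real_scaleR_def pw using i1 i2 i3 i4 by simp
  also have "\<dots> = 4 * (LINT p:Om|lborel. F p)" using FT(2) FS(2) FTS(2) by simp
  finally show "4 * (LINT p:Om|lborel. (case p of (x, y, z) \<Rightarrow> \<psi> x * coll \<alpha> G x y z)) =
       (LINT p:Om|lborel. (case p of (x, y, z) \<Rightarrow> (\<psi> x + \<psi> y - \<psi> ((1 - z) * (x + y) / 2) - \<psi> ((1 + z) * (x + y) / 2)) * coll \<alpha> G x y z))"
    unfolding F_def by simp
qed

lemma prod3:
  fixes u v :: "real \<Rightarrow> real"
  assumes u: "integrable lborel u" and v: "integrable lborel v"
  shows "set_integrable lborel Om (\<lambda>(x, y, z). u x * v y)"
proof -
  have [measurable]: "u \<in> borel_measurable borel" "v \<in> borel_measurable borel"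
    using u v by (simp_all add: borel_measurable_integrable)
  have fu: "(\<integral>\<^sup>+x. ennreal (norm (u x)) \<partial>lborel) < \<infinity>" using u unfolding integrable_iff_bounded by simp
  have fv: "(\<integral>\<^sup>+x. ennreal (norm (v x)) \<partial>lborel) < \<infinity>" using v unfolding integrable_iff_bounded by simp
  have "(\<integral>\<^sup>+p. ennreal (norm (indicator Om p *\<^sub>R (case p of (x, y, z) \<Rightarrow> u x * v y))) \<partial>lborel)
     \<le> (\<integral>\<^sup>+p. (case p of (x, y, z) \<Rightarrow> ennreal (norm (u x)) * ennreal (norm (v y)) * indicator {-1..1::real} z) \<partial>lborel)"
  proof (rule nn_integral_mono)
    fix p :: "real \<times> real \<times> real"
    obtain x y z where p: "p = (x, y, z)" by (cases p)
    have "ennreal (norm (indicator Om p *\<^sub>R (u x * v y))) \<le> ennreal (norm (u x) * norm (v y) * indicator {-1..1::real} z)"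
      unfolding p by (intro ennreal_leI) (auto split: split_indicator simp: abs_mult)
    then show "ennreal (norm (indicator Om p *\<^sub>R (case p of (x, y, z) \<Rightarrow> u x * v y))) \<le>
        (case p of (x, y, z) \<Rightarrow> ennreal (norm (u x)) * ennreal (norm (v y)) * indicator {-1..1::real} z)"
      unfolding p by (simp add: ennreal_mult' ennreal_indicator mult.commute)
  qed
  also have "\<dots> = (\<integral>\<^sup>+x. \<integral>\<^sup>+y. \<integral>\<^sup>+z. ennreal (norm (u x)) * ennreal (norm (v y)) * indicator {-1..1::real} z \<partial>lborel \<partial>lborel \<partial>lborel)"
  proof -
    have m: "(\<lambda>p. case p of (x, y, z) \<Rightarrow> ennreal (norm (u x)) * ennreal (norm (v y)) * indicator {-1..1::real} z) \<in> borel_measurable borel"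
      unfolding split_beta' borel_prod[symmetric] by measurable
    show ?thesis by (subst nn3[OF m]) simp
  qed
  also have "\<dots> = (\<integral>\<^sup>+x. \<integral>\<^sup>+y. ennreal (norm (u x)) * ennreal (norm (v y)) * 2 \<partial>lborel \<partial>lborel)"
    by (intro nn_integral_cong) (simp add: nn_integral_cmult)
  also have "\<dots> = (\<integral>\<^sup>+x. ennreal (norm (u x)) * ((\<integral>\<^sup>+y. ennreal (norm (v y)) \<partial>lborel) * 2) \<partial>lborel)"
    by (intro nn_integral_cong) (simp add: nn_integral_cmult nn_integral_multc mult.assoc)
  also have "\<dots> = (\<integral>\<^sup>+x. ennreal (norm (u x)) \<partial>lborel) * ((\<integral>\<^sup>+y. ennreal (norm (v y)) \<partial>lborel) * 2)"
    by (simp add: nn_integral_multc)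
  also have "\<dots> < \<infinity>" using fu fv by (simp add: ennreal_mult_less_top)
  moreover have "(\<lambda>p. indicator Om p *\<^sub>R (case p of (x, y, z) \<Rightarrow> u x * v y)) \<in> borel_measurable lborel"
    unfolding split_beta' measurable_lborel2 borel_prod[symmetric] by measurable
  ultimately show ?thesis unfolding set_integrable_def integrable_iff_bounded
    by simp
qed

lemma Pi_bounds:
  assumes "0 \<le> u" "u < 1"
  shows "0 < Pi_fun u" "Pi_fun u \<le> 1"
proof -
  have a: "0 < 1 - u" "1 - u \<le> 1" using assms by auto
  have "0 \<le> u / (1 - u)" using assms by simp
  then have b: "exp (- (u / (1 - u))) \<le> 1" by simp
  show "0 < Pi_fun u" unfolding Pi_fun_def using a by simp
  show "Pi_fun u \<le> 1" unfolding Pi_fun_def using a b by (simp add: mult_le_one)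
qed

lemma xy'_nonneg:
  fixes x y z :: real
  assumes "0 \<le> x" "0 \<le> y" "-1 \<le> z" "z \<le> 1"
  shows "0 \<le> (1 - z) * (x + y) / 2" "0 \<le> (1 + z) * (x + y) / 2"
  using assms by simp_all

lemma coll_g0:
  fixes x y z :: real
  assumes "0 \<le> x" "0 \<le> y" "-1 \<le> z" "z \<le> 1"
  shows "coll \<alpha> g x y z = coll \<alpha> (\<lambda>v. indicator {0..} v * g v) x y z"
  using xy'_nonneg[OF assms] assms unfolding coll_def Let_def by simp

lemma coll_meas[measurable]:
  assumes [measurable]: "G \<in> borel_measurable borel"
  shows "(\<lambda>p. coll \<alpha> G (fst p) (fst (snd p)) (snd (snd p))) \<in> borel_measurable borel"
  unfolding coll_def Let_def Pi_fun_def borel_prod[symmetric] by measurable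

lemma coll_meas'[measurable (raw)]:
  assumes [measurable]: "G \<in> borel_measurable borel" "f \<in> borel_measurable M" "g \<in> borel_measurable M" "h \<in> borel_measurable M"
  shows "(\<lambda>x. coll \<alpha> G (f x) (g x) (h x)) \<in> borel_measurable M"
  unfolding coll_def Let_def Pi_fun_def by measurable

lemma loss_T:
  fixes G :: "real \<Rightarrow> real"
  assumes "0 \<le> x" "0 \<le> y"
  shows "(\<lambda>(x, y, z). H (x + y) * (G x * G y * Pi_fun (\<alpha> * G ((1 - z) * (x + y) / 2)) * Pi_fun (\<alpha> * G ((1 + z) * (x + y) / 2)))) (Tm (x, y, z))
     = H (x + y) * (G ((1 - z) * (x + y) / 2) * G ((1 + z) * (x + y) / 2) * Pi_fun (\<alpha> * G x) * Pi_fun (\<alpha> * G y))"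
proof (cases "x + y = 0")
  case True
  then have "x = 0" "y = 0" using assms by auto
  then show ?thesis by (simp add: Tm_def)
next
  case False
  have s: "(1 - z) * (x + y) / 2 + (1 + z) * (x + y) / 2 = x + y" by (simp add: field_simps)
  have 1: "(1 - (1 - 2 * x / (x + y))) * (x + y) / 2 = x" using False by (simp add: field_simps)
  have 2: "(1 + (1 - 2 * x / (x + y))) * (x + y) / 2 = y" using False by (simp add: field_simps)
  show ?thesis unfolding Tm_def by (simp only: prod.case s 1 2)
qed

lemma part1:
  fixes g :: "real \<Rightarrow> real" and a b \<alpha> :: real
  assumes apos: "0 < \<alpha>"
    and hg: "\<forall>x\<ge>0. 0 \<le> g x \<and> g x < 1/\<alpha>"
    and gi: "set_integrable lborel {0..} g"
    and xgi: "set_integrable lborel {0..} (\<lambda>x. x * g x)"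
  shows "(LBINT x:{0..}. (a + b * x) * Qop \<alpha> g x) = 0"
proof -
  define g0 where "g0 v = indicator {0..} v * g v" for v :: real
  have g0i: "integrable lborel g0" using gi unfolding set_integrable_def g0_def by simp
  have g0m[measurable]: "g0 \<in> borel_measurable borel" using g0i by (simp add: borel_measurable_integrable)
  have xg0i: "integrable lborel (\<lambda>x. x * g0 x)" using xgi unfolding set_integrable_def g0_def by (simp add: ac_simps)
  have g0b: "0 \<le> g0 v" "\<alpha> * g0 v < 1" for v
  proof -
    show "0 \<le> g0 v" using hg by (simp add: g0_def split: split_indicator)
    show "\<alpha> * g0 v < 1"
    proof (cases "0 \<le> v")
      case True
      then have "g v < 1/\<alpha>" using hg by simp
      then have "\<alpha> * g v < 1" using apos by (simp add: field_simps)
      then show ?thesis using True by (simp add: g0_def)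
    qed (simp add: g0_def)
  qed
  have PB: "0 \<le> Pi_fun (\<alpha> * g0 v)" "Pi_fun (\<alpha> * g0 v) \<le> 1" for v
    using Pi_bounds[of "\<alpha> * g0 v"] g0b[of v] apos by auto
  define L where "L = (\<lambda>(x, y, z). (\<lambda>s. 1 + s) (x + y) * (g0 x * g0 y * Pi_fun (\<alpha> * g0 ((1 - z) * (x + y) / 2)) * Pi_fun (\<alpha> * g0 ((1 + z) * (x + y) / 2))))"
  define Gn where "Gn = (\<lambda>(x, y, z). (\<lambda>s. 1 + s) (x + y) * (g0 ((1 - z) * (x + y) / 2) * g0 ((1 + z) * (x + y) / 2) * Pi_fun (\<alpha> * g0 x) * Pi_fun (\<alpha> * g0 y)))"
  have Lm[measurable]: "L \<in> borel_measurable borel"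
    unfolding L_def Pi_fun_def split_beta' borel_prod[symmetric] by measurable
  have Bi: "set_integrable lborel Om (\<lambda>(x, y, z). (1 + x + y) * g0 x * g0 y)"
  proof -
    have 1: "set_integrable lborel Om (\<lambda>(x, y, z). g0 x * g0 y)" by (rule prod3[OF g0i g0i])
    have 2: "set_integrable lborel Om (\<lambda>(x, y, z). (x * g0 x) * g0 y)" by (rule prod3[OF xg0i g0i])
    have 3: "set_integrable lborel Om (\<lambda>(x, y, z). g0 x * (y * g0 y))" by (rule prod3[OF g0i xg0i])
    have "set_integrable lborel Om (\<lambda>p. (\<lambda>(x, y, z). g0 x * g0 y) p + (\<lambda>(x, y, z). (x * g0 x) * g0 y) p + (\<lambda>(x, y, z). g0 x * (y * g0 y)) p)"
      by (intro set_integral_add(1) 1 2 3)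
    also have "(\<lambda>p. (\<lambda>(x, y, z). g0 x * g0 y) p + (\<lambda>(x, y, z). (x * g0 x) * g0 y) p + (\<lambda>(x, y, z). g0 x * (y * g0 y)) p)
       = (\<lambda>(x, y, z). (1 + x + y) * g0 x * g0 y)"
      by (auto simp: algebra_simps)
    finally show ?thesis .
  qed
  have Li: "set_integrable lborel Om L"
  proof (rule set_integrable_bound[OF Bi])
    show "set_borel_measurable lborel Om L" unfolding set_borel_measurable_def by simp
    show "AE p in lborel. p \<in> Om \<longrightarrow> norm (L p) \<le> norm ((\<lambda>(x, y, z). (1 + x + y) * g0 x * g0 y) p)"
    proof (intro AE_I2 impI)
      fix p assume "p \<in> Om"
      obtain x y z where p: "p = (x, y, z)" by (cases p)
      with \<open>p \<in> Om\<close> have xy: "0 \<le> x" "0 \<le> y" by auto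
      let ?P1 = "Pi_fun (\<alpha> * g0 ((1 - z) * (x + y) / 2))" and ?P2 = "Pi_fun (\<alpha> * g0 ((1 + z) * (x + y) / 2))"
      have "?P1 * ?P2 \<le> 1" using PB by (simp add: mult_le_one)
      moreover have "0 \<le> ?P1 * ?P2" using PB by simp
      moreover have "0 \<le> (1 + x + y) * g0 x * g0 y" using xy g0b by simp
      ultimately have "(1 + x + y) * g0 x * g0 y * (?P1 * ?P2) \<le> (1 + x + y) * g0 x * g0 y"
        by (simp add: mult_left_le)
      moreover have "0 \<le> (1 + x + y) * g0 x * g0 y * (?P1 * ?P2)" using xy g0b PB by simp
      ultimately show "norm (L p) \<le> norm ((\<lambda>(x, y, z). (1 + x + y) * g0 x * g0 y) p)"
        unfolding p L_def by (simp add: ac_simps)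
    qed
  qed
  have Gni: "set_integrable lborel Om Gn"
  proof -
    have "set_integrable lborel Om (\<lambda>p. L (Tm p))"
      by (rule transfer(1)[OF Tm_meas Tm_Om Rf_T Li]) simp_all
    moreover have "L (Tm p) = Gn p" if "p \<in> Om" for p
    proof -
      obtain x y z where p: "p = (x, y, z)" by (cases p)
      with that have xy: "0 \<le> x" "0 \<le> y" by auto
      show ?thesis unfolding p L_def Gn_def using loss_T[OF xy, of "\<lambda>s. 1 + s" g0 \<alpha> z] by simp
    qed
    ultimately show ?thesis using set_integrable_cong[of lborel lborel Om Om "\<lambda>p. L (Tm p)" Gn] by simp
  qed
  define F where "F = (\<lambda>(x, y, z). (a + b * x) * coll \<alpha> g x y z)"
  have Fi: "set_integrable lborel Om F"
  proof (rule set_integrable_bound[of _ _ "\<lambda>p. (\<bar>a\<bar> + \<bar>b\<bar>) * (L p + Gn p)"])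
    show "set_integrable lborel Om (\<lambda>p. (\<bar>a\<bar> + \<bar>b\<bar>) * (L p + Gn p))"
      using set_integral_add(1)[OF Li Gni] by (rule set_integrable_mult_right)
    have "(\<lambda>p. indicator Om p *\<^sub>R F p) = (\<lambda>p. indicator Om p * (a + b * fst p) * coll \<alpha> g0 (fst p) (fst (snd p)) (snd (snd p)))"
    proof
      fix p :: "real \<times> real \<times> real"
      obtain x y z where p: "p = (x, y, z)" by (cases p)
      show "indicator Om p *\<^sub>R F p = indicator Om p * (a + b * fst p) * coll \<alpha> g0 (fst p) (fst (snd p)) (snd (snd p))"
      proof (cases "p \<in> Om")
        case True
        then have xy: "0 \<le> x" "0 \<le> y" "-1 \<le> z" "z \<le> 1" using p by auto
        show ?thesis using True coll_g0[OF xy, where g=g and \<alpha>=\<alpha>] unfolding p F_def g0_def by simp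
      qed simp
    qed
    then show "set_borel_measurable lborel Om F"
      unfolding set_borel_measurable_def measurable_lborel2 borel_prod[symmetric] by simp
    show "AE p in lborel. p \<in> Om \<longrightarrow> norm (F p) \<le> norm ((\<bar>a\<bar> + \<bar>b\<bar>) * (L p + Gn p))"
    proof (intro AE_I2 impI)
      fix p assume "p \<in> Om"
      obtain x y z where p: "p = (x, y, z)" by (cases p)
      with \<open>p \<in> Om\<close> have xy: "0 \<le> x" "0 \<le> y" "-1 \<le> z" "z \<le> 1" by auto
      define x' where "x' = (1 - z) * (x + y) / 2"
      define y' where "y' = (1 + z) * (x + y) / 2"
      define L0 where "L0 = g0 x * g0 y * Pi_fun (\<alpha> * g0 x') * Pi_fun (\<alpha> * g0 y')"
      define G0 where "G0 = g0 x' * g0 y' * Pi_fun (\<alpha> * g0 x) * Pi_fun (\<alpha> * g0 y)"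
      have L0: "0 \<le> L0" unfolding L0_def using g0b PB by simp
      have G0: "0 \<le> G0" unfolding G0_def using g0b PB by simp
      have c: "coll \<alpha> g x y z = G0 - L0"
        using xy'_nonneg[OF xy] xy unfolding coll_def Let_def G0_def L0_def x'_def y'_def g0_def by simp
      have ca: "\<bar>coll \<alpha> g x y z\<bar> \<le> G0 + L0" unfolding c using L0 G0 by simp
      have pa: "\<bar>a + b * x\<bar> \<le> (\<bar>a\<bar> + \<bar>b\<bar>) * (1 + (x + y))"
      proof -
        have "\<bar>a + b * x\<bar> \<le> \<bar>a\<bar> + \<bar>b\<bar> * x" using xy by (simp add: abs_mult order.trans[OF abs_triangle_ineq])
        also have "\<dots> \<le> (\<bar>a\<bar> + \<bar>b\<bar>) * (1 + (x + y))" using xy by (simp add: algebra_simps mult_left_mono)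
        finally show ?thesis .
      qed
      have "\<bar>(a + b * x) * coll \<alpha> g x y z\<bar> \<le> ((\<bar>a\<bar> + \<bar>b\<bar>) * (1 + (x + y))) * (G0 + L0)"
        unfolding abs_mult by (rule mult_mono[OF pa ca]) (use xy L0 G0 in simp_all)
      also have "\<dots> = (\<bar>a\<bar> + \<bar>b\<bar>) * (L p + Gn p)"
        unfolding p L_def Gn_def L0_def G0_def x'_def y'_def by (simp add: algebra_simps)
      finally have "\<bar>F p\<bar> \<le> (\<bar>a\<bar> + \<bar>b\<bar>) * (L p + Gn p)" unfolding p F_def by simp
      then show "norm (F p) \<le> norm ((\<bar>a\<bar> + \<bar>b\<bar>) * (L p + Gn p))" by simp
    qed
  qed
  have meas: "(\<lambda>x. indicator {0..} x * ((a + b * x) * (1/2 * (LBINT y:{0..}. LBINT z:{-1..1}. coll \<alpha> g x y z)))) \<in> borel_measurable lborel"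
  proof -
    have "(\<lambda>x. indicator {0..} x * ((a + b * x) * (1/2 * (LBINT y:{0..}. LBINT z:{-1..1}. coll \<alpha> g x y z)))) =
       (\<lambda>x. indicator {0..} x * ((a + b * x) * (1/2 * (LBINT y:{0..}. LBINT z:{-1..1}. coll \<alpha> g0 x y z))))"
    proof
      fix x :: real
      show "indicator {0..} x * ((a + b * x) * (1/2 * (LBINT y:{0..}. LBINT z:{-1..1}. coll \<alpha> g x y z))) =
       indicator {0..} x * ((a + b * x) * (1/2 * (LBINT y:{0..}. LBINT z:{-1..1}. coll \<alpha> g0 x y z)))"
      proof (cases "0 \<le> x")
        case True
        have "(LBINT y:{0..}. LBINT z:{-1..1}. coll \<alpha> g x y z) = (LBINT y:{0..}. LBINT z:{-1..1}. coll \<alpha> g0 x y z)"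
          by (intro set_lebesgue_integral_cong allI impI) (auto simp: g0_def[abs_def] intro!: coll_g0[OF True])
        then show ?thesis by simp
      qed simp
    qed
    also have "\<dots> \<in> borel_measurable lborel"
      unfolding set_lebesgue_integral_def by measurable
    finally show ?thesis .
  qed
  have "(LBINT x:{0..}. (a + b * x) * Qop \<alpha> g x) = 1/2 * (LINT p:Om|lborel. F p)"
    unfolding Qop_def F_def
    using FUB[where c="\<lambda>x. a + b * x" and K="coll \<alpha> g", OF _ meas] Fi unfolding F_def by simp
  also have "(LINT p:Om|lborel. F p) = 0"
  proof -
    have "4 * (LINT p:Om|lborel. F p) = (LINT p:Om|lborel. (case p of (x, y, z) \<Rightarrow> ((a + b * x) + (a + b * y) - (a + b * ((1 - z) * (x + y) / 2)) - (a + b * ((1 + z) * (x + y) / 2))) * coll \<alpha> g x y z))"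
      using symm(2)[where \<psi>="\<lambda>x. a + b * x" and G=g and \<alpha>=\<alpha>] Fi unfolding F_def by simp
    also have "\<dots> = (LINT p:Om|lborel. 0)"
    proof -
      have e: "(a + b * x) + (a + b * y) - (a + b * ((1 - z) * (x + y) / 2)) - (a + b * ((1 + z) * (x + y) / 2)) = 0" for x y z :: real
        by (simp add: field_simps)
      show ?thesis
      proof (intro set_lebesgue_integral_cong allI impI)
        fix p :: "real \<times> real \<times> real"
        show "(case p of (x, y, z) \<Rightarrow> ((a + b * x) + (a + b * y) - (a + b * ((1 - z) * (x + y) / 2)) - (a + b * ((1 + z) * (x + y) / 2))) * coll \<alpha> g x y z) = 0"
          by (simp only: split_beta' e mult_zero_left)
      qed simp
    qed
    finally show ?thesis by (simp add: set_lebesgue_integral_def)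
  qed
  finally show ?thesis by simp
qed

lemma phi_deriv:
  fixes \<alpha> \<xi> :: real
  assumes "\<xi> < 1"
  shows "(phi \<alpha> has_real_derivative ((1 - \<alpha>/2) / (1 - \<xi>) + \<alpha>)) (at \<xi>)"
proof -
  have "((\<lambda>\<xi>. (1 - \<alpha>/2) * ln (1 / (1 - \<xi>)) + \<alpha> * \<xi>) has_real_derivative ((1 - \<alpha>/2) / (1 - \<xi>) + \<alpha>)) (at \<xi>)"
  proof -
    have nz: "1 + \<xi> * \<xi> - \<xi> * 2 \<noteq> 0"
    proof -
      have "1 + \<xi> * \<xi> - \<xi> * 2 = (1 - \<xi>) * (1 - \<xi>)" by (simp add: algebra_simps)
      then show ?thesis using assms by simp
    qed
    show ?thesis using assms by - (rule derivative_eq_intros refl | simp)+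
  qed
  then show ?thesis unfolding phi_def[abs_def] .
qed

lemma phi_strict:
  fixes \<alpha> :: real
  assumes "0 < \<alpha>" "\<alpha> < 2" "0 \<le> a" "a < b" "b < 1"
  shows "phi \<alpha> a < phi \<alpha> b"
proof -
  have "1 / (1 - a) < 1 / (1 - b)" using assms by (simp add: frac_less2)
  then have "ln (1 / (1 - a)) < ln (1 / (1 - b))" using assms by simp
  then have "(1 - \<alpha>/2) * ln (1 / (1 - a)) < (1 - \<alpha>/2) * ln (1 / (1 - b))" using assms by simp
  moreover have "\<alpha> * a < \<alpha> * b" using assms by simp
  ultimately show ?thesis unfolding phi_def by simp
qed

lemma phi_surj:
  fixes \<alpha> v :: real
  assumes "0 < \<alpha>" "\<alpha> < 2" "0 \<le> v"
  shows "\<exists>\<xi>. 0 \<le> \<xi> \<and> \<xi> < 1 \<and> phi \<alpha> \<xi> = v"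
proof -
  define c where "c = 1 - \<alpha>/2"
  have c: "0 < c" using assms by (simp add: c_def)
  define b where "b = 1 - exp (- v / c)"
  have b: "0 \<le> b" "b < 1" using assms c by (simp_all add: b_def)
  have "phi \<alpha> b = v + \<alpha> * b"
    using c unfolding phi_def b_def c_def[symmetric] by (simp add: ln_div)
  then have "v \<le> phi \<alpha> b" using b assms by simp
  moreover have "phi \<alpha> 0 \<le> v" using assms by (simp add: phi_def)
  moreover have "\<forall>x. 0 \<le> x \<and> x \<le> b \<longrightarrow> isCont (phi \<alpha>) x"
    using b by (auto intro!: DERIV_isCont phi_deriv)
  ultimately obtain \<xi> where "0 \<le> \<xi>" "\<xi> \<le> b" "phi \<alpha> \<xi> = v"
    using IVT[of "phi \<alpha>" 0 v b] b by auto
  then show ?thesis using b by auto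
qed

lemma f_alpha_phi:
  fixes \<alpha> \<xi> :: real
  assumes "0 < \<alpha>" "\<alpha> < 2" "0 \<le> \<xi>" "\<xi> < 1"
  shows "f_alpha \<alpha> (phi \<alpha> \<xi>) = 1 / ((1 - \<alpha>/2) / (1 - \<xi>) + \<alpha>)"
proof -
  have inj: "inj_on (phi \<alpha>) {0..<1}"
  proof (rule inj_onI)
    fix a b assume "a \<in> {0..<1}" "b \<in> {0..<1}" "phi \<alpha> a = phi \<alpha> b"
    then show "a = b" using phi_strict[OF assms(1,2), of a b] phi_strict[OF assms(1,2), of b a]
      by (cases a b rule: linorder_cases) auto
  qed
  have "the_inv_into {0..<1} (phi \<alpha>) (phi \<alpha> \<xi>) = \<xi>"
    using assms by (intro the_inv_into_f_f inj) auto
  moreover have "deriv (phi \<alpha>) \<xi> = (1 - \<alpha>/2) / (1 - \<xi>) + \<alpha>"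
    using phi_deriv[OF assms(4)] by (rule DERIV_imp_deriv)
  ultimately show ?thesis unfolding f_alpha_def by simp
qed

lemma f_alpha_balance:
  fixes \<alpha> v :: real
  assumes a: "0 < \<alpha>" "\<alpha> < 2" and v: "0 \<le> v"
  shows "f_alpha \<alpha> v = (exp (\<alpha> / (1 - \<alpha>/2)) / (1 - \<alpha>/2)) * exp (- v / (1 - \<alpha>/2)) * Pi_fun (\<alpha> * f_alpha \<alpha> v)"
proof -
  obtain \<xi> where \<xi>: "0 \<le> \<xi>" "\<xi> < 1" "phi \<alpha> \<xi> = v" using phi_surj[OF a v] by blast
  define c where "c = 1 - \<alpha>/2"
  have c: "0 < c" using a by (simp add: c_def)
  have q: "0 < 1 - \<xi>" using \<xi> by simp
  have f: "f_alpha \<alpha> v = (1 - \<xi>) / (c + \<alpha> * (1 - \<xi>))"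
    using f_alpha_phi[OF a \<xi>(1,2)] \<xi>(3) c q unfolding c_def[symmetric] by (simp add: field_simps)
  have d: "0 < c + \<alpha> * (1 - \<xi>)" by (intro add_pos_pos c mult_pos_pos a(1) q)
  have u1: "1 - \<alpha> * f_alpha \<alpha> v = c / (c + \<alpha> * (1 - \<xi>))" unfolding f using d by (simp add: field_simps)
  have u2: "\<alpha> * f_alpha \<alpha> v / (1 - \<alpha> * f_alpha \<alpha> v) = \<alpha> * (1 - \<xi>) / c"
  proof -
    have "\<alpha> * f_alpha \<alpha> v = \<alpha> * (1 - \<xi>) / (c + \<alpha> * (1 - \<xi>))" unfolding f by simp
    then have "\<alpha> * f_alpha \<alpha> v / (1 - \<alpha> * f_alpha \<alpha> v) = (\<alpha> * (1 - \<xi>) / (c + \<alpha> * (1 - \<xi>))) / (c / (c + \<alpha> * (1 - \<xi>)))"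
      unfolding u1 by simp
    also have "\<dots> = \<alpha> * (1 - \<xi>) / c" using d c by simp
    finally show ?thesis .
  qed
  have P: "Pi_fun (\<alpha> * f_alpha \<alpha> v) = c / (c + \<alpha> * (1 - \<xi>)) * exp (- (\<alpha> * (1 - \<xi>) / c))"
    unfolding Pi_fun_def u2 unfolding u1 ..
  have E: "exp (- v / c) = (1 - \<xi>) * exp (- (\<alpha> * \<xi> / c))"
  proof -
    have "- v / c = - ln (1 / (1 - \<xi>)) + (- (\<alpha> * \<xi> / c))"
      using \<xi>(3) c unfolding phi_def c_def[symmetric] by (simp add: field_simps)
    then have "exp (- v / c) = exp (- ln (1 / (1 - \<xi>))) * exp (- (\<alpha> * \<xi> / c))"
      by (simp only: exp_add)
    also have "exp (- ln (1 / (1 - \<xi>))) = 1 - \<xi>" using q by (simp add: exp_minus ln_div)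
    finally show ?thesis .
  qed
  have "(exp (\<alpha> / c) / c) * exp (- v / c) * Pi_fun (\<alpha> * f_alpha \<alpha> v)
      = (1 - \<xi>) / (c + \<alpha> * (1 - \<xi>)) * (exp (\<alpha> / c) * exp (- (\<alpha> * \<xi> / c)) * exp (- (\<alpha> * (1 - \<xi>) / c)))"
  proof -
    have gen: "(A / c) * (q * B) * (c / D * C) = q / D * (A * B * C)" if "D \<noteq> 0" for A B C q D :: real
      using c that by (simp add: field_simps)
    show ?thesis unfolding E P by (rule gen) (use d in simp)
  qed
  also have "exp (\<alpha> / c) * exp (- (\<alpha> * \<xi> / c)) * exp (- (\<alpha> * (1 - \<xi>) / c)) = exp (\<alpha> / c + - (\<alpha> * \<xi> / c) + - (\<alpha> * (1 - \<xi>) / c))"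
    by (simp only: exp_add)
  also have "\<alpha> / c + - (\<alpha> * \<xi> / c) + - (\<alpha> * (1 - \<xi>) / c) = 0"
    using c by (simp add: field_simps)
  finally show ?thesis unfolding c_def[symmetric] f by simp
qed

lemma part2:
  fixes \<alpha> :: real
  assumes a: "0 < \<alpha>" "\<alpha> < 2"
  shows "\<forall>x\<ge>0. Qop \<alpha> (f_alpha \<alpha>) x = 0"
proof (intro allI impI)
  fix x :: real assume x: "0 \<le> x"
  define f where "f = f_alpha \<alpha>"
  define K where "K = exp (\<alpha> / (1 - \<alpha>/2)) / (1 - \<alpha>/2)"
  define E where "E v = exp (- v / (1 - \<alpha>/2))" for v
  define P where "P v = Pi_fun (\<alpha> * f v)" for v
  have fb: "f v = K * E v * P v" if "0 \<le> v" for v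
    unfolding f_def K_def E_def P_def using f_alpha_balance[OF a that] .
  have E2: "E u * E w = E x * E y" if "u + w = x + y" for u w x y
  proof -
    have g: "- u / d + - w / d = - (u + w) / (d::real)" for u w d
      by (simp add: diff_divide_distrib)
    show ?thesis unfolding E_def exp_add[symmetric] g that ..
  qed
  have c0: "coll \<alpha> f x y z = 0" if "0 \<le> y" "-1 \<le> z" "z \<le> 1" for y z
  proof -
    define x' where "x' = (1 - z) * (x + y) / 2"
    define y' where "y' = (1 + z) * (x + y) / 2"
    have nn: "0 \<le> x'" "0 \<le> y'" unfolding x'_def y'_def using xy'_nonneg[OF x that] by auto
    have s: "x' + y' = x + y" unfolding x'_def y'_def by (simp add: field_simps)
    have "coll \<alpha> f x y z = f x' * f y' * P x * P y - f x * f y * P x' * P y'"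
      unfolding coll_def Let_def P_def x'_def y'_def ..
    also have "\<dots> = K * K * (E x' * E y') * P x' * P y' * P x * P y - K * K * (E x * E y) * P x * P y * P x' * P y'"
      unfolding fb[OF nn(1)] fb[OF nn(2)] fb[OF x] fb[OF that(1)] by (simp only: ac_simps)
    also have "\<dots> = 0" unfolding E2[OF s] by (simp only: ac_simps diff_self)
    finally show ?thesis .
  qed
  have inner: "(LBINT z:{-1..1}. coll \<alpha> f x y z) = 0" if "0 \<le> y" for y
    using set_lebesgue_integral_cong[of "{-1..1}" lborel "\<lambda>z. coll \<alpha> f x y z" "\<lambda>z. 0"] c0[OF that]
    by (simp add: set_lebesgue_integral_def)
  have "(LBINT y:{0..}. LBINT z:{-1..1}. coll \<alpha> f x y z) = 0"
    using set_lebesgue_integral_cong[of "{0..}" lborel "\<lambda>y. LBINT z:{-1..1}. coll \<alpha> f x y z" "\<lambda>y. 0"] inner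
    by (simp add: set_lebesgue_integral_def)
  then show "Qop \<alpha> (f_alpha \<alpha>) x = 0" unfolding Qop_def f_def by (simp add: set_lebesgue_integral_def)
qed

lemma ent_deriv:
  fixes \<alpha> v :: real
  assumes "0 < \<alpha>" "0 < v" "\<alpha> * v < 1"
  shows "(ent \<alpha> has_real_derivative ent' \<alpha> v) (at v)"
proof -
  have "((\<lambda>v. v * ln (\<alpha> * v / (1 - \<alpha> * v))) has_real_derivative (ln (\<alpha> * v / (1 - \<alpha> * v)) + 1 / (1 - \<alpha> * v))) (at v)"
    using assms apply -
    apply (rule derivative_eq_intros refl | simp)+
    apply (simp add: field_simps)
    done
  then show ?thesis unfolding ent_def[abs_def] ent'_def .
qed

lemma ent'_eq:
  fixes \<alpha> v :: real
  assumes "0 < \<alpha>" "0 < v" "\<alpha> * v < 1"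
  shows "ent' \<alpha> v = ln \<alpha> + 1 + ln v - ln (Pi_fun (\<alpha> * v))"
proof -
  have q: "0 < 1 - \<alpha> * v" using assms by simp
  have "ln (Pi_fun (\<alpha> * v)) = ln (1 - \<alpha> * v) + - (\<alpha> * v / (1 - \<alpha> * v))"
    unfolding Pi_fun_def using q by (simp add: ln_mult)
  moreover have "ln (\<alpha> * v / (1 - \<alpha> * v)) = ln \<alpha> + ln v - ln (1 - \<alpha> * v)"
    using assms q by (simp add: ln_div ln_mult)
  moreover have "1 / (1 - \<alpha> * v) = 1 + \<alpha> * v / (1 - \<alpha> * v)"
    using q by (simp add: field_simps)
  ultimately show ?thesis unfolding ent'_def by simp
qed

lemma Hineq:
  fixes G :: "real \<Rightarrow> real" and \<alpha> x y z :: real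
  assumes a: "0 < \<alpha>" and G: "\<And>v. 0 \<le> v \<Longrightarrow> 0 < G v \<and> G v < 1/\<alpha>"
    and xy: "0 \<le> x" "0 \<le> y" "-1 \<le> z" "z \<le> 1"
  shows "(ent' \<alpha> (G x) + ent' \<alpha> (G y) - ent' \<alpha> (G ((1 - z) * (x + y) / 2)) - ent' \<alpha> (G ((1 + z) * (x + y) / 2))) * coll \<alpha> G x y z \<le> 0"
proof -
  define x' where "x' = (1 - z) * (x + y) / 2"
  define y' where "y' = (1 + z) * (x + y) / 2"
  have nn: "0 \<le> x'" "0 \<le> y'" unfolding x'_def y'_def using xy'_nonneg[OF xy] by auto
  define P where "P v = Pi_fun (\<alpha> * G v)" for v
  have Gp: "0 < G v" and Ga: "\<alpha> * G v < 1" if "0 \<le> v" for v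
  proof -
    show "0 < G v" using G[OF that] by simp
    have "G v < 1/\<alpha>" using G[OF that] by simp
    then show "\<alpha> * G v < 1" using a by (simp add: field_simps)
  qed
  have Pp: "0 < P v" if "0 \<le> v" for v
    unfolding P_def using Pi_bounds(1)[of "\<alpha> * G v"] Gp[OF that] Ga[OF that] a by simp
  have e: "ent' \<alpha> (G v) = ln \<alpha> + 1 + ln (G v) - ln (P v)" if "0 \<le> v" for v
    unfolding P_def using ent'_eq[OF a Gp[OF that] Ga[OF that]] .
  define A where "A = G x' * G y' * P x * P y"
  define B where "B = G x * G y * P x' * P y'"
  have A: "0 < A" unfolding A_def using Gp nn Pp xy by simp
  have B: "0 < B" unfolding B_def using Gp nn Pp xy by simp
  have pos: "0 < G x" "0 < G y" "0 < G x'" "0 < G y'" "0 < P x" "0 < P y" "0 < P x'" "0 < P y'"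
    using Gp Pp nn xy by auto
  have lA: "ln A = ln (G x') + ln (G y') + ln (P x) + ln (P y)"
    unfolding A_def using pos by (simp add: ln_mult)
  have lB: "ln B = ln (G x) + ln (G y) + ln (P x') + ln (P y')"
    unfolding B_def using pos by (simp add: ln_mult)
  have sum: "ent' \<alpha> (G x) + ent' \<alpha> (G y) - ent' \<alpha> (G x') - ent' \<alpha> (G y') = ln B - ln A"
    unfolding e[OF xy(1)] e[OF xy(2)] e[OF nn(1)] e[OF nn(2)] lA lB by simp
  have c: "coll \<alpha> G x y z = A - B"
    unfolding coll_def Let_def A_def B_def P_def x'_def y'_def by simp
  have "(ln B - ln A) * (A - B) \<le> 0"
  proof (cases "B \<le> A")
    case True
    then have "ln B \<le> ln A" using A B by simp
    then show ?thesis using True by (simp add: mult_nonpos_nonneg)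
  next
    case False
    then have "ln A \<le> ln B" using A B by simp
    then show ?thesis using False by (simp add: mult_nonneg_nonpos)
  qed
  then show ?thesis unfolding x'_def[symmetric] y'_def[symmetric] sum c .
qed

lemma seq_quot:
  fixes f :: "real \<Rightarrow> real"
  assumes "(f has_real_derivative D) (at t)" "Y \<longlonglongrightarrow> t" "\<And>i. Y i \<noteq> t"
  shows "(\<lambda>i. (f (Y i) - f t) / (Y i - t)) \<longlonglongrightarrow> D"
proof -
  have "((\<lambda>y. (f y - f t) / (y - t)) \<longlongrightarrow> D) (at t)"
    using assms(1) unfolding has_field_derivative_iff .
  then have "((\<lambda>y. (f y - f t) / (y - t)) \<circ> Y) \<longlonglongrightarrow> D"
    unfolding tendsto_at_iff_sequentially using assms(2,3) by auto
  then show ?thesis by (simp add: comp_def)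
qed

lemma quot_bound:
  fixes \<phi> \<phi>' :: "real \<Rightarrow> real"
  assumes d: "\<And>c. c \<in> ball t r \<Longrightarrow> (\<phi> has_real_derivative \<phi>' c) (at c)"
    and b: "\<And>c. c \<in> ball t r \<Longrightarrow> \<bar>\<phi>' c\<bar> \<le> B"
    and y: "y \<in> ball t r" "y \<noteq> t"
  shows "\<bar>(\<phi> y - \<phi> t) / (y - t)\<bar> \<le> B"
proof (cases "y < t")
  case True
  have "\<exists>z. y < z \<and> z < t \<and> \<phi> t - \<phi> y = (t - y) * \<phi>' z"
  proof (rule MVT2[OF True])
    fix c assume "y \<le> c" "c \<le> t"
    then have "c \<in> ball t r" using y by (auto simp: dist_real_def)
    then show "DERIV \<phi> c :> \<phi>' c" by (rule d)
  qed
  then obtain z where z: "y < z" "z < t" "\<phi> t - \<phi> y = (t - y) * \<phi>' z" by blast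
  have "z \<in> ball t r" using z y by (auto simp: dist_real_def)
  moreover have "(\<phi> y - \<phi> t) / (y - t) = \<phi>' z" using z True
    by (simp add: field_simps)
  ultimately show ?thesis using b by simp
next
  case False
  then have ty: "t < y" using y by simp
  have "\<exists>z. t < z \<and> z < y \<and> \<phi> y - \<phi> t = (y - t) * \<phi>' z"
  proof (rule MVT2[OF ty])
    fix c assume "t \<le> c" "c \<le> y"
    then have "c \<in> ball t r" using y by (auto simp: dist_real_def)
    then show "DERIV \<phi> c :> \<phi>' c" by (rule d)
  qed
  then obtain z where z: "t < z" "z < y" "\<phi> y - \<phi> t = (y - t) * \<phi>' z" by blast
  have "z \<in> ball t r" using z y by (auto simp: dist_real_def)
  moreover have "(\<phi> y - \<phi> t) / (y - t) = \<phi>' z" using z ty by simp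
  ultimately show ?thesis using b by simp
qed

lemma part3:
  fixes g :: "real \<Rightarrow> real \<Rightarrow> real" and T :: "real set" and t \<alpha> :: real and bd :: "real \<Rightarrow> real"
  assumes a: "0 < \<alpha>" "\<alpha> < 2"
    and To: "open T" and tT: "t \<in> T"
    and pos: "\<forall>s\<in>T. \<forall>x\<ge>0. 0 < g x s \<and> g x s < 1/\<alpha>"
    and der: "\<forall>s\<in>T. \<forall>x\<ge>0. ((\<lambda>r. g x r) has_real_derivative Qop \<alpha> (\<lambda>y. g y s) x) (at s)"
    and ei: "\<forall>s\<in>T. set_integrable lborel {0..} (\<lambda>x. ent \<alpha> (g x s))"
    and bdi: "set_integrable lborel {0..} bd"
    and bdb: "\<forall>s\<in>T. \<forall>x\<ge>0. \<bar>ent' \<alpha> (g x s) * Qop \<alpha> (\<lambda>y. g y s) x\<bar> \<le> bd x"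
    and F3: "set_integrable lborel ({0..} \<times> {0..} \<times> {-1..1})
          (\<lambda>(x, y, \<xi>). ent' \<alpha> (g x t) * coll \<alpha> (\<lambda>z. g z t) x y \<xi>)"
  shows "\<exists>D. ((\<lambda>s. LBINT x:{0..}. ent \<alpha> (g x s)) has_real_derivative D) (at t) \<and> D \<le> 0"
proof -
  define q where "q x = ent' \<alpha> (g x t) * Qop \<alpha> (\<lambda>y. g y t) x" for x
  define D where "D = (LBINT x:{0..}. q x)"
  define Q where "Q s = (LBINT x:{0..}. ent \<alpha> (g x s))" for s
  have dx: "((\<lambda>r. ent \<alpha> (g x r)) has_real_derivative ent' \<alpha> (g x s) * Qop \<alpha> (\<lambda>y. g y s) x) (at s)"
    if "s \<in> T" "0 \<le> x" for s x
  proof -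
    have "0 < g x s" "g x s < 1/\<alpha>" using pos that by auto
    then have "\<alpha> * g x s < 1" using a by (simp add: field_simps)
    then have "(ent \<alpha> has_real_derivative ent' \<alpha> (g x s)) (at (g x s))"
      using ent_deriv[OF a(1) \<open>0 < g x s\<close>] by simp
    moreover have gd: "((\<lambda>r. g x r) has_real_derivative Qop \<alpha> (\<lambda>y. g y s) x) (at s)" using der that by auto
    ultimately show ?thesis using DERIV_chain2[OF _ gd] by simp
  qed
  obtain r where r: "0 < r" "ball t r \<subseteq> T" using To tT open_contains_ball by blast
  define f where "f x = indicator {0..} x * q x" for x
  have conv: "(\<lambda>i. (Q (Y i) - Q t) / (Y i - t)) \<longlonglongrightarrow> D"
    if Y: "\<And>i. Y i \<in> ball t r" "\<And>i. Y i \<noteq> t" "Y \<longlonglongrightarrow> t" for Y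
  proof -
    have YT: "Y i \<in> T" for i using Y(1) r(2) by auto
    define u where "u i x = indicator {0..} x * ((ent \<alpha> (g x (Y i)) - ent \<alpha> (g x t)) / (Y i - t))" for i x
    have ii: "integrable lborel (\<lambda>x. indicator {0..} x * ent \<alpha> (g x s))" if "s \<in> T" for s
      using ei that unfolding set_integrable_def by simp
    have ueq: "u i = (\<lambda>x. (indicator {0..} x * ent \<alpha> (g x (Y i)) - indicator {0..} x * ent \<alpha> (g x t)) / (Y i - t))" for i
      unfolding u_def by (auto simp: algebra_simps diff_divide_distrib)
    have um: "u i \<in> borel_measurable lborel" for i
      unfolding ueq using ii[OF YT[of i]] ii[OF tT] by (intro borel_measurable_divide borel_measurable_diff borel_measurable_integrable) auto
    have uint: "integral\<^sup>L lborel (u i) = (Q (Y i) - Q t) / (Y i - t)" for i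
      unfolding ueq Q_def set_lebesgue_integral_def using ii[OF YT[of i]] ii[OF tT] by simp
    have lim: "(\<lambda>i. u i x) \<longlonglongrightarrow> f x" for x
    proof (cases "0 \<le> x")
      case True
      have "(\<lambda>i. (ent \<alpha> (g x (Y i)) - ent \<alpha> (g x t)) / (Y i - t)) \<longlonglongrightarrow> q x"
        unfolding q_def by (rule seq_quot[OF dx[OF tT True] Y(3) Y(2)])
      then show ?thesis unfolding u_def f_def using True by simp
    next
      case False
      then show ?thesis unfolding u_def f_def by simp
    qed
    have fm: "f \<in> borel_measurable lborel"
      by (rule borel_measurable_LIMSEQ_real[OF lim um])
    have wi: "integrable lborel (\<lambda>x. indicator {0..} x * bd x)"
      using bdi unfolding set_integrable_def by simp
    have bound: "AE x in lborel. norm (u i x) \<le> indicator {0..} x * bd x" for i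
    proof (intro AE_I2)
      fix x :: real
      show "norm (u i x) \<le> indicator {0..} x * bd x"
      proof (cases "0 \<le> x")
        case True
        have "\<bar>(ent \<alpha> (g x (Y i)) - ent \<alpha> (g x t)) / (Y i - t)\<bar> \<le> bd x"
        proof (rule quot_bound[where \<phi>'="\<lambda>c. ent' \<alpha> (g x c) * Qop \<alpha> (\<lambda>y. g y c) x"])
          fix c assume "c \<in> ball t r"
          then have "c \<in> T" using r by auto
          then show "((\<lambda>r. ent \<alpha> (g x r)) has_real_derivative ent' \<alpha> (g x c) * Qop \<alpha> (\<lambda>y. g y c) x) (at c)"
            using dx True by simp
          show "\<bar>ent' \<alpha> (g x c) * Qop \<alpha> (\<lambda>y. g y c) x\<bar> \<le> bd x" using bdb \<open>c \<in> T\<close> True by simp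
        qed (use Y in auto)
        then show ?thesis unfolding u_def using True by simp
      next
        case False
        then show ?thesis unfolding u_def by simp
      qed
    qed
    have "(\<lambda>i. integral\<^sup>L lborel (u i)) \<longlonglongrightarrow> integral\<^sup>L lborel f"
      by (rule integral_dominated_convergence[OF fm um wi _ bound]) (simp add: lim)
    moreover have "integral\<^sup>L lborel f = D"
      unfolding f_def D_def set_lebesgue_integral_def by simp
    ultimately show ?thesis unfolding uint by simp
  qed
  have deriv: "(Q has_real_derivative D) (at t)"
    unfolding has_field_derivative_iff tendsto_at_iff_sequentially
  proof (intro allI impI)
    fix X :: "nat \<Rightarrow> real"
    assume X: "\<forall>i. X i \<in> UNIV - {t}" "X \<longlonglongrightarrow> t"
    have "eventually (\<lambda>i. X i \<in> ball t r) sequentially"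
      using topological_tendstoD[OF X(2) open_ball] r(1) by simp
    then obtain N where N: "\<And>i. i \<ge> N \<Longrightarrow> X i \<in> ball t r" by (auto simp: eventually_sequentially)
    have "(\<lambda>i. (Q (X (i + N)) - Q t) / (X (i + N) - t)) \<longlonglongrightarrow> D"
    proof (rule conv)
      show "X (i + N) \<in> ball t r" for i using N by simp
      show "X (i + N) \<noteq> t" for i using X(1) by auto
      show "(\<lambda>i. X (i + N)) \<longlonglongrightarrow> t" using X(2) by (rule LIMSEQ_ignore_initial_segment)
    qed
    then have "(\<lambda>i. (Q (X i) - Q t) / (X i - t)) \<longlonglongrightarrow> D" by (rule LIMSEQ_offset)
    then show "((\<lambda>y. (Q y - Q t) / (y - t)) \<circ> X) \<longlonglongrightarrow> D" by (simp add: comp_def)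
  qed
  have fm: "f \<in> borel_measurable lborel"
  proof -
    define Y where "Y i = t + r / (real i + 2)" for i :: nat
    have Yb: "Y i \<in> ball t r" "Y i \<noteq> t" for i
    proof -
      have p: "0 < r / (real i + 2)" using r(1) by simp
      have l: "r / (real i + 2) < r" using r(1) by (simp add: field_simps add_pos_nonneg)
      show "Y i \<in> ball t r" "Y i \<noteq> t" using p l by (auto simp: Y_def dist_real_def)
    qed
    have "(\<lambda>i. r / (real i + 2)) \<longlonglongrightarrow> 0"
      by real_asymp
    then have Yl: "Y \<longlonglongrightarrow> t" unfolding Y_def using tendsto_add[of "\<lambda>_. t" t sequentially] by force
    define u where "u i x = indicator {0..} x * ((ent \<alpha> (g x (Y i)) - ent \<alpha> (g x t)) / (Y i - t))" for i x
    have YT: "Y i \<in> T" for i using Yb r(2) by auto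
    have ii: "integrable lborel (\<lambda>x. indicator {0..} x * ent \<alpha> (g x s))" if "s \<in> T" for s
      using ei that unfolding set_integrable_def by simp
    have ueq: "u i = (\<lambda>x. (indicator {0..} x * ent \<alpha> (g x (Y i)) - indicator {0..} x * ent \<alpha> (g x t)) / (Y i - t))" for i
      unfolding u_def by (auto simp: algebra_simps diff_divide_distrib)
    have um: "u i \<in> borel_measurable lborel" for i
      unfolding ueq using ii[OF YT[of i]] ii[OF tT] by (intro borel_measurable_divide borel_measurable_diff borel_measurable_integrable) auto
    have lim: "(\<lambda>i. u i x) \<longlonglongrightarrow> f x" for x
    proof (cases "0 \<le> x")
      case True
      have "(\<lambda>i. (ent \<alpha> (g x (Y i)) - ent \<alpha> (g x t)) / (Y i - t)) \<longlonglongrightarrow> q x"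
        unfolding q_def by (rule seq_quot[OF dx[OF tT True] Yl Yb(2)])
      then show ?thesis unfolding u_def f_def using True by simp
    next
      case False
      then show ?thesis unfolding u_def f_def by simp
    qed
    show ?thesis by (rule borel_measurable_LIMSEQ_real[OF lim um])
  qed
  have "D = 1/2 * (LINT p:Om|lborel. (case p of (x, y, z) \<Rightarrow> ent' \<alpha> (g x t) * coll \<alpha> (\<lambda>z. g z t) x y z))"
  proof -
    have "D = (LBINT x:{0..}. ent' \<alpha> (g x t) * (1/2 * (LBINT y:{0..}. LBINT z:{-1..1}. coll \<alpha> (\<lambda>z. g z t) x y z)))"
      unfolding D_def q_def Qop_def ..
    also have "\<dots> = 1/2 * (LINT p:Om|lborel. (case p of (x, y, z) \<Rightarrow> ent' \<alpha> (g x t) * coll \<alpha> (\<lambda>z. g z t) x y z))"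
    proof (rule FUB)
      show "set_integrable lborel Om (\<lambda>(x, y, z). ent' \<alpha> (g x t) * coll \<alpha> (\<lambda>z. g z t) x y z)" using F3 .
      show "(\<lambda>x. indicator {0..} x * (ent' \<alpha> (g x t) * (1/2 * (LBINT y:{0..}. LBINT z:{-1..1}. coll \<alpha> (\<lambda>z. g z t) x y z)))) \<in> borel_measurable lborel"
        using fm unfolding f_def q_def Qop_def .
    qed
    finally show ?thesis .
  qed
  moreover have "(LINT p:Om|lborel. (case p of (x, y, z) \<Rightarrow> ent' \<alpha> (g x t) * coll \<alpha> (\<lambda>z. g z t) x y z)) \<le> 0"
  proof -
    let ?S = "\<lambda>p. case p of (x, y, z) \<Rightarrow> (ent' \<alpha> (g x t) + ent' \<alpha> (g y t) - ent' \<alpha> (g ((1 - z) * (x + y) / 2) t) - ent' \<alpha> (g ((1 + z) * (x + y) / 2) t)) * coll \<alpha> (\<lambda>z. g z t) x y z"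
    have Si: "set_integrable lborel Om ?S"
      using symm(1)[where \<psi>="\<lambda>v. ent' \<alpha> (g v t)" and G="\<lambda>z. g z t" and \<alpha>=\<alpha>] F3 by simp
    have "4 * (LINT p:Om|lborel. (case p of (x, y, z) \<Rightarrow> ent' \<alpha> (g x t) * coll \<alpha> (\<lambda>z. g z t) x y z)) = (LINT p:Om|lborel. ?S p)"
      using symm(2)[where \<psi>="\<lambda>v. ent' \<alpha> (g v t)" and G="\<lambda>z. g z t" and \<alpha>=\<alpha>] F3 by simp
    also have "\<dots> \<le> (LINT p:Om|lborel. 0)"
    proof (rule set_integral_mono[OF Si])
      show "set_integrable lborel Om (\<lambda>p. 0::real)" by (simp add: set_integrable_def)
      fix p assume "p \<in> Om"
      obtain x y z where p: "p = (x, y, z)" by (cases p)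
      with \<open>p \<in> Om\<close> have xy: "0 \<le> x" "0 \<le> y" "-1 \<le> z" "z \<le> 1" by auto
      have G: "0 < g v t \<and> g v t < 1/\<alpha>" if "0 \<le> v" for v using pos tT that by auto
      show "?S p \<le> 0" unfolding p using Hineq[where G="\<lambda>z. g z t", OF a(1) G xy] by simp
    qed
    also have "\<dots> = 0" by (simp add: set_lebesgue_integral_def)
    finally show ?thesis by simp
  qed
  ultimately have "D \<le> 0" by simp
  with deriv show ?thesis unfolding Q_def by blast
qed


theorem theorem4p4:
  fixes \<alpha> :: real
  assumes "0 < \<alpha>" and "\<alpha> < 2"
  shows
   "(\<forall>(g :: real \<Rightarrow> real) (a :: real) (b :: real).
       (\<forall>x\<ge>0. 0 \<le> g x \<and> g x < 1/\<alpha>) \<and>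
       set_integrable lborel {0..} g \<and>
       set_integrable lborel {0..} (\<lambda>x. x * g x) \<and>
       (LBINT x:{0..}. x * g x) = 1
       \<longrightarrow> (LBINT x:{0..}. (a + b * x) * Qop \<alpha> g x) = 0)
    \<and> (\<forall>x\<ge>0. Qop \<alpha> (f_alpha \<alpha>) x = 0)
    \<and> (\<forall>(g :: real \<Rightarrow> real \<Rightarrow> real) (T :: real set) (t :: real).
       open T \<and> t \<in> T \<and>
       (\<forall>s\<in>T. \<forall>x\<ge>0. 0 < g x s \<and> g x s < 1/\<alpha>) \<and>
       (\<forall>s\<in>T. \<forall>x\<ge>0. ((\<lambda>r. g x r) has_real_derivative Qop \<alpha> (\<lambda>y. g y s) x) (at s)) \<and>
       (\<forall>s\<in>T. set_integrable lborel {0..} (\<lambda>x. ent \<alpha> (g x s))) \<and>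
       (\<exists>bd. set_integrable lborel {0..} bd \<and>
          (\<forall>s\<in>T. \<forall>x\<ge>0. \<bar>ent' \<alpha> (g x s) * Qop \<alpha> (\<lambda>y. g y s) x\<bar> \<le> bd x)) \<and>
       set_integrable lborel ({0..} \<times> {0..} \<times> {-1..1})
          (\<lambda>(x, y, \<xi>). ent' \<alpha> (g x t) * coll \<alpha> (\<lambda>z. g z t) x y \<xi>)
       \<longrightarrow> (\<exists>D. ((\<lambda>s. LBINT x:{0..}. ent \<alpha> (g x s)) has_real_derivative D) (at t)
                \<and> D \<le> 0))"
proof (intro conjI)
  show "\<forall>(g :: real \<Rightarrow> real) (a :: real) (b :: real).
       (\<forall>x\<ge>0. 0 \<le> g x \<and> g x < 1/\<alpha>) \<and>
       set_integrable lborel {0..} g \<and>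
       set_integrable lborel {0..} (\<lambda>x. x * g x) \<and>
       (LBINT x:{0..}. x * g x) = 1
       \<longrightarrow> (LBINT x:{0..}. (a + b * x) * Qop \<alpha> g x) = 0"
    using part1[OF assms(1)] by blast
  show "\<forall>x\<ge>0. Qop \<alpha> (f_alpha \<alpha>) x = 0" using part2[OF assms] .
  show "\<forall>(g :: real \<Rightarrow> real \<Rightarrow> real) (T :: real set) (t :: real).
       open T \<and> t \<in> T \<and>
       (\<forall>s\<in>T. \<forall>x\<ge>0. 0 < g x s \<and> g x s < 1/\<alpha>) \<and>
       (\<forall>s\<in>T. \<forall>x\<ge>0. ((\<lambda>r. g x r) has_real_derivative Qop \<alpha> (\<lambda>y. g y s) x) (at s)) \<and>
       (\<forall>s\<in>T. set_integrable lborel {0..} (\<lambda>x. ent \<alpha> (g x s))) \<and>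
       (\<exists>bd. set_integrable lborel {0..} bd \<and>
          (\<forall>s\<in>T. \<forall>x\<ge>0. \<bar>ent' \<alpha> (g x s) * Qop \<alpha> (\<lambda>y. g y s) x\<bar> \<le> bd x)) \<and>
       set_integrable lborel ({0..} \<times> {0..} \<times> {-1..1})
          (\<lambda>(x, y, \<xi>). ent' \<alpha> (g x t) * coll \<alpha> (\<lambda>z. g z t) x y \<xi>)
       \<longrightarrow> (\<exists>D. ((\<lambda>s. LBINT x:{0..}. ent \<alpha> (g x s)) has_real_derivative D) (at t)
                \<and> D \<le> 0)"
  proof (intro allI impI, elim conjE exE)
    fix g :: "real \<Rightarrow> real \<Rightarrow> real" and T :: "real set" and t :: real and bd :: "real \<Rightarrow> real"
    assume h: "open T" "t \<in> T" "\<forall>s\<in>T. \<forall>x\<ge>0. 0 < g x s \<and> g x s < 1/\<alpha>"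
      "\<forall>s\<in>T. \<forall>x\<ge>0. ((\<lambda>r. g x r) has_real_derivative Qop \<alpha> (\<lambda>y. g y s) x) (at s)"
      "\<forall>s\<in>T. set_integrable lborel {0..} (\<lambda>x. ent \<alpha> (g x s))"
      "set_integrable lborel {0..} bd"
      "\<forall>s\<in>T. \<forall>x\<ge>0. \<bar>ent' \<alpha> (g x s) * Qop \<alpha> (\<lambda>y. g y s) x\<bar> \<le> bd x"
      "set_integrable lborel ({0..} \<times> {0..} \<times> {-1..1}) (\<lambda>(x, y, \<xi>). ent' \<alpha> (g x t) * coll \<alpha> (\<lambda>z. g z t) x y \<xi>)"
    show "\<exists>D. ((\<lambda>s. LBINT x:{0..}. ent \<alpha> (g x s)) has_real_derivative D) (at t) \<and> D \<le> 0"
      by (rule part3[OF assms h])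
  qed
qed

end
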